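(* Consider the planar system \[ \frac{dx}{dt}= x\Big(1-\frac{x}{\gamma}\Big)-\frac{xy}{(1+\alpha\xi)(\omega x^2+1)+x},\qquad \frac{dy}{dt}= \frac{\delta\big(x+\xi(\omega x^2+1)\big)y}{(1+\alpha\xi)(\omega x^2+1)+x}-my-\epsilon y^2, \] with positive parameters $\gamma,\alpha,\xi,\omega,\delta,m,\epsilon$ satisfying $\delta>m$. Then every solution of this system with initial condition in the positive quadrant ($x(0)>0$, $y(0)>0$) remains bounded.
   Context: $x(t)$ and $y(t)$ denote the (nondimensionalized) prey and predator densities; $\gamma$ is the prey carrying capacity, $\alpha$ the quality and $\xi$ the quantity of additional food given to predators, $\omega$ the prey group defence parameter, $\delta$ the maximal predator growth rate, $m$ the predator mortality rate and $\epsilon$ the intra-specific competition coefficient among predators. *)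

theory Defs
  imports Complex_Main
begin

definition denom :: "real \<Rightarrow> real \<Rightarrow> real \<Rightarrow> real \<Rightarrow> real" where
  "denom \<alpha> \<xi> \<omega> x = (1 + \<alpha> * \<xi>) * (\<omega> * x\<^sup>2 + 1) + x"

definition prey_rhs :: "real \<Rightarrow> real \<Rightarrow> real \<Rightarrow> real \<Rightarrow> real \<Rightarrow> real \<Rightarrow> real" where
  "prey_rhs \<gamma> \<alpha> \<xi> \<omega> x y = x * (1 - x / \<gamma>) - x * y / denom \<alpha> \<xi> \<omega> x"

definition pred_rhs :: "real \<Rightarrow> real \<Rightarrow> real \<Rightarrow> real \<Rightarrow> real \<Rightarrow> real \<Rightarrow> real \<Rightarrow> real \<Rightarrow> real" where
  "pred_rhs \<alpha> \<xi> \<omega> \<delta> m \<epsilon> x y =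
     \<delta> * (x + \<xi> * (\<omega> * x\<^sup>2 + 1)) * y / denom \<alpha> \<xi> \<omega> x - m * y - \<epsilon> * y\<^sup>2"

end

theory Submission
  imports Defs "HOL-Analysis.Analysis"
begin

lemma deriv_at_pos:
  fixes f :: "real \<Rightarrow> real"
  assumes "t > 0" "(f has_real_derivative D) (at t within {0..})"
  shows "(f has_real_derivative D) (at t)"
proof -
  have "(f has_real_derivative D) (at t within {0<..})"
    using assms(2) has_field_derivative_subset by (metis Ioi_le_Ico)
  then show ?thesis using assms(1) at_within_open[of t "{0<..}"] by simp
qed

lemma barrier:
  fixes z :: "real \<Rightarrow> real" and K :: real
  assumes cont: "continuous_on {0..} z" and z0: "z 0 \<le> K"
    and der: "\<And>t. t > 0 \<Longrightarrow> z t > K \<Longrightarrow> \<exists>D. (z has_real_derivative D) (at t) \<and> D \<le> 0"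
  shows "\<forall>t\<ge>0. z t \<le> K"
proof (rule ccontr)
  assume "\<not> ?thesis"
  then obtain T where T: "T \<ge> 0" "z T > K" by (auto simp: not_le)
  define S where "S = {t \<in> {0..T}. z t \<le> K}"
  have contT: "continuous_on {0..T} z" using cont by (rule continuous_on_subset) auto
  have "closed S" unfolding S_def
    by (rule continuous_on_closed_Collect_le[OF contT]) (auto intro: continuous_intros)
  moreover have "S \<noteq> {}" using z0 T by (auto simp: S_def intro!: exI[of _ 0])
  moreover have "bdd_above S" by (auto simp: S_def bdd_above_def)
  ultimately have sS: "Sup S \<in> S" by (rule closed_contains_Sup[rotated 2])
  define s where "s = Sup S"
  have s: "0 \<le> s" "s \<le> T" "z s \<le> K" using sS by (auto simp: S_def s_def)
  have above: "z t > K" if "s < t" "t \<le> T" for t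
  proof (rule ccontr)
    assume "\<not> z t > K"
    then have "t \<in> S" using that s by (auto simp: S_def)
    then have "t \<le> s" unfolding s_def by (rule cSup_upper) fact
    then show False using that by simp
  qed
  have "s < T" using s T by (cases "s = T") auto
  have "z T \<le> z s"
  proof (rule DERIV_nonpos_imp_decreasing_open[of s T z])
    show "s \<le> T" using \<open>s < T\<close> by simp
    show "\<exists>y. DERIV z x :> y \<and> y \<le> 0" if "s < x" "x < T" for x
      using der[of x] above[of x] that s by auto
    show "continuous_on {s..T} z" using contT by (rule continuous_on_subset) (use s in auto)
  qed
  then show False using s T by simp
qed

lemma positivity:
  fixes z G :: "real \<Rightarrow> real"
  assumes cont: "continuous_on {0..} z" and z0: "z 0 > 0"
    and der: "\<And>t. t > 0 \<Longrightarrow> (z has_real_derivative z t * G t) (at t)"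
    and Gc: "\<And>T. T > 0 \<Longrightarrow> (\<forall>t\<in>{0..T}. z t \<ge> 0) \<Longrightarrow> continuous_on {0..T} G"
  shows "\<forall>t\<ge>0. z t > 0"
proof (rule ccontr)
  assume "\<not> ?thesis"
  then obtain T where T: "T \<ge> 0" "z T \<le> 0" by (auto simp: not_less)
  define S where "S = {t \<in> {0..T}. z t \<le> 0}"
  have contT: "continuous_on {0..T} z" using cont by (rule continuous_on_subset) auto
  have "closed S" unfolding S_def
    by (rule continuous_on_closed_Collect_le[OF contT]) (auto intro: continuous_intros)
  moreover have "S \<noteq> {}" using T by (auto simp: S_def)
  moreover have "bdd_below S" by (auto simp: S_def bdd_below_def)
  ultimately have sS: "Inf S \<in> S" by (rule closed_contains_Inf[rotated 2])
  define s where "s = Inf S"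
  have s: "0 \<le> s" "s \<le> T" "z s \<le> 0" using sS by (auto simp: S_def s_def)
  have before: "z t > 0" if "0 \<le> t" "t < s" for t
  proof (rule ccontr)
    assume "\<not> z t > 0"
    then have "t \<in> S" using that s by (auto simp: S_def)
    then have "s \<le> t" unfolding s_def by (rule cInf_lower) fact
    then show False using that by simp
  qed
  have s0: "s > 0" using s z0 by (cases "s = 0") auto
  have contS: "continuous_on {0..s} z" using contT by (rule continuous_on_subset) (use s in auto)
  have zs: "z s = 0"
  proof (rule ccontr)
    assume "z s \<noteq> 0"
    then have "z s < 0" using s by simp
    then obtain u where u: "0 \<le> u" "u \<le> s" "z u = 0"
      using IVT2'[of z s 0 0, OF _ _ _ contS] z0 s0 by auto
    then have "u \<noteq> s" "u \<noteq> 0" using \<open>z s < 0\<close> z0 by auto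
    then show False using before[of u] u by simp
  qed
  have nn: "\<forall>t\<in>{0..s}. z t \<ge> 0"
    using before zs by (metis atLeastAtMost_iff less_eq_real_def order.order_iff_strict)
  have Gcs: "continuous_on {0..s} G" using Gc[OF s0 nn] .
  obtain M where M: "\<forall>t\<in>{0..s}. \<bar>G t\<bar> \<le> M"
    using continuous_attains_sup[of "{0..s}" "\<lambda>t. \<bar>G t\<bar>"] Gcs s0
    by (auto intro: continuous_intros)
  define h where "h t = z t * exp (M * t)" for t
  have "h 0 \<le> h s"
  proof (rule DERIV_nonneg_imp_increasing_open[of 0 s h])
    show "0 \<le> s" using s0 by simp
    show "\<exists>y. DERIV h x :> y \<and> y \<ge> 0" if "0 < x" "x < s" for x
    proof (intro exI conjI)
      show "DERIV h x :> z x * G x * exp (M * x) + z x * (exp (M * x) * M)"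
        unfolding h_def using der[of x] that
        by (auto intro!: derivative_eq_intros)
      have "z x > 0" using before that by simp
      moreover have "\<bar>G x\<bar> \<le> M" using M that by auto
      then have "G x + M \<ge> 0" by linarith
      ultimately have "z x * (G x + M) * exp (M * x) \<ge> 0" by simp
      then show "z x * G x * exp (M * x) + z x * (exp (M * x) * M) \<ge> 0"
        by (simp add: algebra_simps)
    qed
    show "continuous_on {0..s} h" unfolding h_def using contS
      by (auto intro!: continuous_intros)
  qed
  then show False using z0 zs by (simp add: h_def)
qed

theorem mainTheorem1:
  fixes \<gamma> \<alpha> \<xi> \<omega> \<delta> m \<epsilon> :: real and x y :: "real \<Rightarrow> real"
  assumes "\<gamma> > 0" "\<alpha> > 0" "\<xi> > 0" "\<omega> > 0" "\<delta> > 0" "m > 0" "\<epsilon> > 0" "\<delta> > m"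
    and "x 0 > 0" "y 0 > 0"
    and "\<And>t. t \<ge> 0 \<Longrightarrow> (x has_real_derivative prey_rhs \<gamma> \<alpha> \<xi> \<omega> (x t) (y t)) (at t within {0..})"
    and "\<And>t. t \<ge> 0 \<Longrightarrow> (y has_real_derivative pred_rhs \<alpha> \<xi> \<omega> \<delta> m \<epsilon> (x t) (y t)) (at t within {0..})"
  shows "\<exists>B. \<forall>t\<ge>0. \<bar>x t\<bar> \<le> B \<and> \<bar>y t\<bar> \<le> B"
proof -
  note dx = assms(11) and dy = assms(12)
  have cx: "continuous_on {0..} x"
    using dx by (auto simp: continuous_on_eq_continuous_within intro: DERIV_continuous)
  have cy: "continuous_on {0..} y"
    using dy by (auto simp: continuous_on_eq_continuous_within intro: DERIV_continuous)
  have dpos: "denom \<alpha> \<xi> \<omega> u \<ge> 1" if "u \<ge> 0" for u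
  proof -
    have "(1 + \<alpha> * \<xi>) * (\<omega> * u\<^sup>2 + 1) \<ge> 1 * 1"
      using assms(2,3,4) by (intro mult_mono) auto
    then show ?thesis using that by (simp add: denom_def)
  qed
  define Gx where "Gx t = 1 - x t / \<gamma> - y t / denom \<alpha> \<xi> \<omega> (x t)" for t
  have xpos: "\<forall>t\<ge>0. x t > 0"
  proof (rule positivity[OF cx assms(9)])
    fix t :: real assume "t > 0"
    have "prey_rhs \<gamma> \<alpha> \<xi> \<omega> (x t) (y t) = x t * Gx t"
      by (simp add: prey_rhs_def Gx_def algebra_simps)
    then show "(x has_real_derivative x t * Gx t) (at t)"
      using deriv_at_pos[OF \<open>t > 0\<close> dx[of t]] \<open>t > 0\<close> by simp
  next
    fix T :: real assume "T > 0" "\<forall>t\<in>{0..T}. x t \<ge> 0"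
    then have "\<forall>t\<in>{0..T}. denom \<alpha> \<xi> \<omega> (x t) \<noteq> 0" using dpos by force
    moreover have "continuous_on {0..T} x" "continuous_on {0..T} y"
      using cx cy by (auto intro: continuous_on_subset)
    ultimately show "continuous_on {0..T} Gx" unfolding Gx_def denom_def
      using assms(1) by (auto intro!: continuous_intros)
  qed
  define Gy where "Gy t = \<delta> * (x t + \<xi> * (\<omega> * (x t)\<^sup>2 + 1)) / denom \<alpha> \<xi> \<omega> (x t) - m - \<epsilon> * y t" for t
  have ypos: "\<forall>t\<ge>0. y t > 0"
  proof (rule positivity[OF cy assms(10)])
    fix t :: real assume "t > 0"
    have "pred_rhs \<alpha> \<xi> \<omega> \<delta> m \<epsilon> (x t) (y t) = y t * Gy t"
      by (simp add: pred_rhs_def Gy_def algebra_simps power2_eq_square)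
    then show "(y has_real_derivative y t * Gy t) (at t)"
      using deriv_at_pos[OF \<open>t > 0\<close> dy[of t]] \<open>t > 0\<close> by simp
  next
    fix T :: real assume "T > 0"
    have "\<forall>t\<in>{0..T}. denom \<alpha> \<xi> \<omega> (x t) \<noteq> 0" using dpos xpos
      by (metis atLeastAtMost_iff less_eq_real_def not_one_le_zero)
    moreover have "continuous_on {0..T} x" "continuous_on {0..T} y"
      using cx cy by (auto intro: continuous_on_subset)
    ultimately show "continuous_on {0..T} Gy" unfolding Gy_def denom_def
      by (auto intro!: continuous_intros)
  qed
  define Kx where "Kx = max (x 0) \<gamma>"
  have xb: "\<forall>t\<ge>0. x t \<le> Kx"
  proof (rule barrier[OF cx])
    show "x 0 \<le> Kx" by (simp add: Kx_def)
    fix t :: real assume t: "t > 0" "x t > Kx"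
    show "\<exists>D. (x has_real_derivative D) (at t) \<and> D \<le> 0"
    proof (intro exI conjI)
      show "(x has_real_derivative prey_rhs \<gamma> \<alpha> \<xi> \<omega> (x t) (y t)) (at t)"
        using deriv_at_pos[OF t(1) dx[of t]] t by simp
      have xt: "x t > 0" "y t > 0" "x t > \<gamma>" using xpos ypos t by (auto simp: Kx_def)
      have dd: "denom \<alpha> \<xi> \<omega> (x t) > 0" using dpos[of "x t"] xt by simp
      have "x t * (1 - x t / \<gamma>) \<le> 0"
        using xt assms(1) by (intro mult_nonneg_nonpos) (auto simp: field_simps)
      moreover have "x t * y t / denom \<alpha> \<xi> \<omega> (x t) \<ge> 0" using xt dd by simp
      ultimately show "prey_rhs \<gamma> \<alpha> \<xi> \<omega> (x t) (y t) \<le> 0"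
        by (simp add: prey_rhs_def)
    qed
  qed
  define Ky where "Ky = max (y 0) (\<delta> * (1 + \<xi>) / \<epsilon>)"
  have yb: "\<forall>t\<ge>0. y t \<le> Ky"
  proof (rule barrier[OF cy])
    show "y 0 \<le> Ky" by (simp add: Ky_def)
    fix t :: real assume t: "t > 0" "y t > Ky"
    show "\<exists>D. (y has_real_derivative D) (at t) \<and> D \<le> 0"
    proof (intro exI conjI)
      show "(y has_real_derivative pred_rhs \<alpha> \<xi> \<omega> \<delta> m \<epsilon> (x t) (y t)) (at t)"
        using deriv_at_pos[OF t(1) dy[of t]] t by simp
      have xt: "x t > 0" "y t > 0" using xpos ypos t by auto
      have yK: "y t > \<delta> * (1 + \<xi>) / \<epsilon>" using t by (simp add: Ky_def)
      then have yK': "\<epsilon> * y t > \<delta> * (1 + \<xi>)" using assms(7) by (simp add: field_simps)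
      define d where "d = denom \<alpha> \<xi> \<omega> (x t)"
      have dd: "d \<ge> 1" using dpos[of "x t"] xt by (simp add: d_def)
      have "x t + \<xi> * (\<omega> * (x t)\<^sup>2 + 1) \<le> (1 + \<xi>) * d"
      proof -
        have "\<omega> * (x t)\<^sup>2 + 1 \<le> (1 + \<alpha> * \<xi>) * (\<omega> * (x t)\<^sup>2 + 1)"
          using assms(2,3,4) by (simp add: algebra_simps)
        then have a: "\<omega> * (x t)\<^sup>2 + 1 \<le> d" using xt by (simp add: d_def denom_def)
        have b: "x t \<le> d" using assms(2,3,4) by (simp add: d_def denom_def add_nonneg_nonneg)
        show ?thesis using mult_left_mono[OF a, of \<xi>] b assms(3) by (simp add: algebra_simps)
      qed
      then have "\<delta> * (x t + \<xi> * (\<omega> * (x t)\<^sup>2 + 1)) / d \<le> \<delta> * (1 + \<xi>)"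
        using dd assms(5) by (simp add: divide_le_eq mult_left_mono mult.assoc[symmetric])
      then have "Gy t \<le> 0" using yK' assms(6) by (simp add: Gy_def d_def)
      moreover have "pred_rhs \<alpha> \<xi> \<omega> \<delta> m \<epsilon> (x t) (y t) = y t * Gy t"
        by (simp add: pred_rhs_def Gy_def algebra_simps power2_eq_square)
      ultimately show "pred_rhs \<alpha> \<xi> \<omega> \<delta> m \<epsilon> (x t) (y t) \<le> 0"
        using xt by (simp add: mult_nonneg_nonpos)
    qed
  qed
  show ?thesis
    using xpos ypos xb yb
    by (intro exI[of _ "max Kx Ky"]) (auto simp: abs_of_pos)
qed

end
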